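(* Let $n,p\ge1$, let $\mathbf{X}\in\mathbb{R}^{n\times p}$ be fixed, $\beta^0\in\mathbb{R}^p$, and $\mathbf{Y}=\mathbf{X}\beta^0+\varepsilon$ with $\varepsilon_1,\ldots,\varepsilon_n$ i.i.d., $\mathbb{E}[\varepsilon_i]=0$, $\mathrm{Var}(\varepsilon_i)=\sigma^2\in(0,\infty)$. Let $\lambda>0$ and $\hat\beta=(\hat\Sigma+\lambda I_p)^{-1}n^{-1}\mathbf{X}^T\mathbf{Y}$. Assume $\Omega_{\min}(\lambda)>0$ and $$\lambda\,\Omega_{\min}(\lambda)^{-1/2}\,\|\theta^0\|_2\le n^{-1/2}\sigma\,\lambda_{\min\neq0}(\hat\Sigma).$$ Then $\max_{1\le j\le p}\big(\mathbb{E}[\hat\beta_j]-\theta^0_j\big)^2\le\min_{1\le j\le p}\mathrm{Var}(\hat\beta_j)$.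
   Context: $\hat\Sigma=n^{-1}\mathbf{X}^T\mathbf{X}$; $P_{\mathbf{X}}=\mathbf{X}^T(\mathbf{X}\mathbf{X}^T)^{-}\mathbf{X}$ (Moore–Penrose pseudo-inverse), the orthogonal projection onto the row space of $\mathbf{X}$; $\theta^0=P_{\mathbf{X}}\beta^0$. $\Omega(\lambda)=(\hat\Sigma+\lambda I_p)^{-1}\hat\Sigma(\hat\Sigma+\lambda I_p)^{-1}$, $\Omega_{\min}(\lambda)=\min_j\Omega_{jj}(\lambda)$. $\lambda_{\min\neq0}(A)$ is the smallest nonzero eigenvalue of a symmetric matrix $A$. (The displayed condition is the paper's condition $\lambda\Omega_{\min}(\lambda)^{-1/2}\le n^{-1/2}\sigma\|\theta^0\|_2^{-1}\lambda_{\min\neq0}(\hat\Sigma)$ multiplied through by $\|\theta^0\|_2$.) *)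

theory Defs
  imports "HOL-Analysis.Analysis" "HOL-Probability.Probability"
begin

definition mp_pinv :: "real^'n^'m \<Rightarrow> real^'m^'n" where
  "mp_pinv A = (THE G. A ** G ** A = A \<and> G ** A ** G = G \<and>
       transpose (A ** G) = A ** G \<and> transpose (G ** A) = G ** A)"

definition proj_rows :: "real^'p^'n \<Rightarrow> real^'p^'p" where
  "proj_rows X = transpose X ** mp_pinv (X ** transpose X) ** X"

definition Sigma_hat :: "real^'p^'n \<Rightarrow> real^'p^'p" where
  "Sigma_hat X = (1 / real CARD('n)) *\<^sub>R (transpose X ** X)"

definition Omega_mat :: "real^'p^'n \<Rightarrow> real \<Rightarrow> real^'p^'p" where
  "Omega_mat X lam = matrix_inv (Sigma_hat X + lam *\<^sub>R mat 1) ** Sigma_hat X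
                      ** matrix_inv (Sigma_hat X + lam *\<^sub>R mat 1)"

definition Omega_min :: "real^'p^'n \<Rightarrow> real \<Rightarrow> real" where
  "Omega_min X lam = Min (range (\<lambda>j. Omega_mat X lam $ j $ j))"

definition lambda_min_nonzero :: "real^'p^'p \<Rightarrow> real" where
  "lambda_min_nonzero A = Min {\<mu>. \<mu> \<noteq> 0 \<and> (\<exists>v. v \<noteq> 0 \<and> A *v v = \<mu> *\<^sub>R v)}"

definition ridge_est :: "real^'p^'n \<Rightarrow> real \<Rightarrow> real^'n \<Rightarrow> real^'p" where
  "ridge_est X lam Y = matrix_inv (Sigma_hat X + lam *\<^sub>R mat 1)
                        *v ((1 / real CARD('n)) *\<^sub>R (transpose X *v Y))"

end

theory Submission
  imports Defs
begin


lemma var_lin: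
  fixes eps :: "'n::finite \<Rightarrow> 'a \<Rightarrow> real" and M :: "'a measure"
  assumes P: "prob_space M" and meas: "\<And>i. eps i \<in> borel_measurable M"
    and ind: "prob_space.indep_vars M (\<lambda>_. borel) eps UNIV"
    and sq: "\<And>i. integrable M (\<lambda>\<omega>. (eps i \<omega>)\<^sup>2)"
    and e0: "\<And>i. prob_space.expectation M (eps i) = 0"
    and v: "\<And>i. prob_space.variance M (eps i) = s2"
  shows "prob_space.expectation M (\<lambda>\<omega>. c + (\<Sum>i\<in>UNIV. a i * eps i \<omega>)) = c"
    and "prob_space.variance M (\<lambda>\<omega>. c + (\<Sum>i\<in>UNIV. a i * eps i \<omega>)) = s2 * (\<Sum>i\<in>UNIV. (a i)\<^sup>2)"
proof -
  interpret prob_space M by (rule P)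
  have int: "integrable M (eps i)" for i
    by (rule square_integrable_imp_integrable[OF meas sq])
  have intS: "integrable M (\<lambda>\<omega>. \<Sum>i\<in>UNIV. a i * eps i \<omega>)"
    using int by auto
  have E: "expectation (\<lambda>\<omega>. c + (\<Sum>i\<in>UNIV. a i * eps i \<omega>)) = c"
    using int e0 by (simp add: Bochner_Integration.integral_add intS prob_space)
  then show "expectation (\<lambda>\<omega>. c + (\<Sum>i\<in>UNIV. a i * eps i \<omega>)) = c" .
  have cross: "expectation (\<lambda>\<omega>. eps i \<omega> * eps k \<omega>) = (if i = k then s2 else 0)
       \<and> integrable M (\<lambda>\<omega>. eps i \<omega> * eps k \<omega>)" for i k
  proof (cases "i = k")
    case True
    have "s2 = expectation (\<lambda>\<omega>. (eps i \<omega>)\<^sup>2)" using v[of i] e0[of i] by simp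
    then show ?thesis using True sq[of i] by (simp add: power2_eq_square)
  next
    case False
    have iv: "indep_vars (\<lambda>_. borel) eps {i, k}"
      by (rule indep_vars_subset[OF ind]) auto
    have "expectation (\<lambda>\<omega>. \<Prod>j\<in>{i,k}. eps j \<omega>) = (\<Prod>j\<in>{i,k}. expectation (eps j))"
      by (rule indep_vars_lebesgue_integral) (use iv int in auto)
    moreover have "integrable M (\<lambda>\<omega>. \<Prod>j\<in>{i,k}. eps j \<omega>)"
      by (rule indep_vars_integrable) (use iv int in auto)
    ultimately show ?thesis using False e0 by simp
  qed
  have "(\<lambda>\<omega>. (c + (\<Sum>i\<in>UNIV. a i * eps i \<omega>) - c)\<^sup>2) =
        (\<lambda>\<omega>. \<Sum>i\<in>UNIV. \<Sum>k\<in>UNIV. a i * a k * (eps i \<omega> * eps k \<omega>))"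
    by (simp add: power2_eq_square sum_product algebra_simps)
  then have "variance (\<lambda>\<omega>. c + (\<Sum>i\<in>UNIV. a i * eps i \<omega>)) =
     (\<Sum>i\<in>UNIV. \<Sum>k\<in>UNIV. a i * a k * expectation (\<lambda>\<omega>. eps i \<omega> * eps k \<omega>))"
    using cross by (simp add: E)
  also have "\<dots> = (\<Sum>i\<in>UNIV. a i * a i * s2)"
  proof -
    have ce: "expectation (\<lambda>\<omega>. eps i \<omega> * eps k \<omega>) = (if i = k then s2 else 0)" for i k
      using cross by blast
    show ?thesis by (simp add: ce if_distrib sum.delta cong: if_cong)
  qed
  finally show "variance (\<lambda>\<omega>. c + (\<Sum>i\<in>UNIV. a i * eps i \<omega>)) = s2 * (\<Sum>i\<in>UNIV. (a i)\<^sup>2)"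
    by (simp add: sum_distrib_left power2_eq_square mult.commute)
qed


lemma minv:
  fixes A :: "real^'n^'n"
  assumes "invertible A"
  shows "A ** matrix_inv A = mat 1" "matrix_inv A ** A = mat 1"
proof -
  have "\<exists>A'. A ** A' = mat 1 \<and> A' ** A = mat 1" using assms unfolding invertible_def by blast
  from someI_ex[OF this] show "A ** matrix_inv A = mat 1" "matrix_inv A ** A = mat 1"
    unfolding matrix_inv_def by auto
qed

lemma inner_mv: "((A::real^'n^'m) *v x) \<bullet> y = x \<bullet> (transpose A *v y)"
  by (metis dot_lmul_matrix inner_commute transpose_matrix_vector)

lemma sym_inner: "transpose (A::real^'n^'n) = A \<Longrightarrow> (A *v x) \<bullet> y = x \<bullet> (A *v y)"
  by (metis inner_mv)

lemma pinv_unique: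
  fixes A :: "real^'n^'m" and G H :: "real^'m^'n"
  assumes g1: "A ** G ** A = A" and g2: "G ** A ** G = G" and g3: "transpose (A ** G) = A ** G"
    and g4: "transpose (G ** A) = G ** A"
    and h1: "A ** H ** A = A" and h2: "H ** A ** H = H" and h3: "transpose (A ** H) = A ** H"
    and h4: "transpose (H ** A) = H ** A"
  shows "G = H"
proof -
  have tA: "transpose A = transpose A ** transpose H ** transpose A"
    by (metis h1 matrix_transpose_mul matrix_mul_assoc)
  have tA2: "transpose A = transpose A ** transpose G ** transpose A"
    by (metis g1 matrix_transpose_mul matrix_mul_assoc)
  have "G = G ** (transpose G ** transpose A)"
    by (metis g2 g3 matrix_transpose_mul matrix_mul_assoc)
  also have "\<dots> = G ** ((transpose G ** transpose A) ** (transpose H ** transpose A))"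
    by (metis tA matrix_mul_assoc)
  also have "\<dots> = G ** ((A ** G) ** (A ** H))"
    by (metis g3 h3 matrix_transpose_mul)
  also have "\<dots> = G ** A ** H"
    by (metis g2 matrix_mul_assoc)
  finally have G: "G = G ** A ** H" .
  have "H = (transpose A ** transpose H) ** H"
    by (metis h2 h4 matrix_transpose_mul matrix_mul_assoc)
  also have "\<dots> = ((transpose A ** transpose G) ** (transpose A ** transpose H)) ** H"
    by (metis tA2 matrix_mul_assoc)
  also have "\<dots> = ((G ** A) ** (H ** A)) ** H"
    by (metis g4 h4 matrix_transpose_mul)
  also have "\<dots> = G ** A ** H"
    by (metis h2 matrix_mul_assoc)
  finally show ?thesis using G by simp
qed

lemma pinv_exists:
  fixes B :: "real^'m^'m"
  assumes sB: "transpose B = B"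
  shows "\<exists>G. B ** G ** B = B \<and> G ** B ** G = G \<and> transpose (B ** G) = B ** G \<and> transpose (G ** B) = G ** B"
proof -
  define N where "N = {x. B *v x = 0}"
  have subN: "subspace N"
    unfolding N_def subspace_def by (simp add: matrix_vector_right_distrib matrix_vector_mult_scaleR)
  obtain Bs where BsN: "Bs \<subseteq> N" and po: "pairwise orthogonal Bs" and n1: "\<And>x. x \<in> Bs \<Longrightarrow> norm x = 1"
    and indB: "independent Bs" and spB: "span Bs = N"
    using orthonormal_basis_subspace[OF subN] by blast
  have finB: "finite Bs" using indB independent_imp_finite by blast
  define K :: "real^'m^'m" where "K = (\<chi> i j. \<Sum>b\<in>Bs. b$i * b$j)"
  have Kv: "K *v x = (\<Sum>b\<in>Bs. (b \<bullet> x) *\<^sub>R b)" for x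
  proof -
    have "(K *v x) $ i = (\<Sum>b\<in>Bs. (b \<bullet> x) * b $ i)" for i
      unfolding K_def matrix_vector_mult_def inner_vec_def
      by (simp add: sum_distrib_left sum_distrib_right mult_ac sum.swap[of _ Bs])
    then show ?thesis by (simp add: vec_eq_iff sum_component)
  qed
  have KN: "K *v x \<in> N" for x
    unfolding Kv spB[symmetric] by (intro span_sum span_mul span_base) 
  have Kb: "(K *v x) \<bullet> b = x \<bullet> b" if b: "b \<in> Bs" for x b
  proof -
    have "(K *v x) \<bullet> b = (\<Sum>b'\<in>Bs. (b' \<bullet> x) * (b' \<bullet> b))" unfolding Kv by (simp add: inner_sum_left)
    also have "\<dots> = (\<Sum>b'\<in>Bs. if b' = b then b \<bullet> x else 0)"
    proof (rule sum.cong[OF refl])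
      fix b' assume b': "b' \<in> Bs"
      show "(b' \<bullet> x) * (b' \<bullet> b) = (if b' = b then b \<bullet> x else 0)"
      proof (cases "b' = b")
        case True
        then have "b' \<bullet> b = 1" using n1[OF b] by (simp add: dot_square_norm)
        then show ?thesis using True by simp
      next
        case False
        then have "b' \<bullet> b = 0" using po b b' unfolding pairwise_def orthogonal_def by blast
        then show ?thesis using False by simp
      qed
    qed
    also have "\<dots> = x \<bullet> b" using b finB by (simp add: inner_commute)
    finally show ?thesis .
  qed
  have Korth: "(x - K *v x) \<bullet> z = 0" if z: "z \<in> N" for x z
  proof -
    have "orthogonal (x - K *v x) z"
      by (rule orthogonal_to_span[of z Bs]) (use z spB Kb in \<open>auto simp: orthogonal_def inner_diff_left\<close>)
    then show ?thesis by (simp add: orthogonal_def)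
  qed
  have Kfix: "K *v z = z" if z: "z \<in> N" for z
  proof -
    have w: "K *v z - z \<in> N" using KN z subN by (simp add: subspace_diff)
    have "(z - K *v z) \<bullet> (K *v z - z) = 0" by (rule Korth[OF w])
    then have "(K *v z - z) \<bullet> (K *v z - z) = 0" by (simp add: inner_diff_left inner_diff_right)
    then show ?thesis by simp
  qed
  have tK: "transpose K = K" by (simp add: K_def transpose_def vec_eq_iff mult.commute)
  have BK: "B *v (K *v x) = 0" for x using KN[of x] by (simp add: N_def)
  have KB: "K *v (B *v x) = 0" for x
  proof -
    have "b \<bullet> (B *v x) = 0" if "b \<in> Bs" for b
      using BsN that sym_inner[OF sB, of b x] by (auto simp: N_def inner_commute)
    then show ?thesis unfolding Kv by simp
  qed
  have KK: "K *v (K *v x) = K *v x" for x using Kfix KN by blast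
  define C where "C = B + K"
  have Cv: "C *v x = B *v x + K *v x" for x by (simp add: C_def matrix_vector_mult_add_rdistrib)
  have injC: "inj ((*v) C)"
  proof (rule linear_injective_0[THEN iffD2])
    show "linear ((*v) C)" by simp
    show "\<forall>x. C *v x = 0 \<longrightarrow> x = 0"
    proof (intro allI impI)
      fix x assume "C *v x = 0"
      then have e: "B *v x = - (K *v x)" by (simp add: Cv eq_neg_iff_add_eq_0)
      have "(K *v x) \<bullet> (K *v x) = - ((B *v x) \<bullet> (K *v x))" by (simp add: e)
      also have "\<dots> = - (x \<bullet> (B *v (K *v x)))" by (simp add: sym_inner[OF sB])
      also have "\<dots> = 0" by (simp add: BK)
      finally have "K *v x = 0" by simp
      then have "x \<in> N" using e by (simp add: N_def)
      then show "x = 0" using Kfix \<open>K *v x = 0\<close> by metis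
    qed
  qed
  have invC: "invertible C"
    using injC matrix_left_invertible_injective invertible_left_inverse by blast
  define Ci where "Ci = matrix_inv C"
  have CCi: "C *v (Ci *v x) = x" for x using minv(1)[OF invC] by (simp add: Ci_def matrix_vector_mul_assoc)
  have CiC: "Ci *v (C *v x) = x" for x using minv(2)[OF invC] by (simp add: Ci_def matrix_vector_mul_assoc)
  have CiK: "Ci *v (K *v x) = K *v x" for x
  proof -
    have "C *v (K *v x) = K *v x" by (simp add: Cv BK KK)
    then show ?thesis using CiC by metis
  qed
  have KCi: "K *v (Ci *v x) = K *v x" for x
  proof -
    have "K *v x = K *v (C *v (Ci *v x))" by (simp add: CCi)
    also have "\<dots> = K *v (Ci *v x)" by (simp add: Cv matrix_vector_right_distrib KB KK)
    finally show ?thesis by simp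
  qed
  have BCi: "B *v (Ci *v x) = x - K *v x" for x
    using CCi[of x] KCi[of x] by (simp add: Cv algebra_simps)
  have CiB: "Ci *v (B *v x) = x - K *v x" for x
  proof -
    have "B *v x = C *v x - K *v x" by (simp add: Cv)
    then show ?thesis by (simp add: matrix_vector_mult_diff_distrib CiC CiK)
  qed
  define G where "G = Ci - K"
  have Gv: "G *v x = Ci *v x - K *v x" for x by (simp add: G_def matrix_vector_mult_diff_rdistrib)
  have BG: "B ** G = mat 1 - K"
    by (simp add: matrix_eq Gv matrix_vector_mul_assoc[symmetric] matrix_vector_mult_diff_distrib
        matrix_vector_mult_diff_rdistrib BCi BK)
  have GB: "G ** B = mat 1 - K"
    by (simp add: matrix_eq Gv matrix_vector_mul_assoc[symmetric] matrix_vector_mult_diff_rdistrib CiB KB)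
  have tIK: "transpose (mat 1 - K) = mat 1 - K"
    using tK by (simp add: transpose_def vec_eq_iff mat_def)
  have 1: "B ** G ** B = B"
    by (simp add: BG matrix_eq matrix_vector_mul_assoc[symmetric] matrix_vector_mult_diff_rdistrib KB)
  have 2: "G ** B ** G = G"
    by (simp add: GB matrix_eq matrix_vector_mul_assoc[symmetric] matrix_vector_mult_diff_rdistrib Gv
       matrix_vector_mult_diff_distrib KCi KK)
  have 3: "transpose (B ** G) = B ** G" using BG tIK by simp
  have 4: "transpose (G ** B) = G ** B" using GB tIK by simp
  show ?thesis using 1 2 3 4 by blast
qed

lemma pinv_sym:
  fixes B :: "real^'m^'m"
  assumes sB: "transpose B = B"
  shows "B ** mp_pinv B ** B = B"
proof -
  let ?P = "\<lambda>G. B ** G ** B = B \<and> G ** B ** G = G \<and> transpose (B ** G) = B ** G \<and> transpose (G ** B) = G ** B"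
  obtain G0 where G0: "?P G0" using pinv_exists[OF sB] by blast
  have "\<exists>!G. ?P G"
  proof (rule ex1I[of _ G0])
    show "?P G0" by (rule G0)
    fix G assume "?P G"
    then show "G = G0" using G0 pinv_unique[of B G G0] by blast
  qed
  from theI'[OF this] show ?thesis unfolding mp_pinv_def by blast
qed



lemma quad_zero:
  fixes a e :: real
  assumes h: "\<And>t. 0 \<le> 2*t*a + t^2*e"
  shows "a = 0"
proof (rule ccontr)
  assume a: "a \<noteq> 0"
  define D where "D = \<bar>e\<bar> + 1"
  have D: "D > 0" "e \<le> D - 1" unfolding D_def by auto
  have "0 \<le> 2*(-a/D)*a + (-a/D)^2*e" by (rule h)
  then have "0 \<le> D^2 * (2*(-a/D)*a + (-a/D)^2*e)" using D by simp
  also have "D^2 * (2*(-a/D)*a + (-a/D)^2*e) = -2*a^2*D + a^2*e"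
    using D by (simp add: field_simps power2_eq_square)
  also have "\<dots> \<le> -2*a^2*D + a^2*(D-1)"
    using D by (simp add: mult_left_mono)
  also have "\<dots> = - (a^2 * (D + 1))" by (simp add: algebra_simps)
  also have "\<dots> < 0" using a D by simp
  finally show False by simp
qed

lemma spec:
  fixes S :: "real^'p^'p"
  assumes sS: "transpose S = S"
    and psd: "\<And>x. 0 \<le> (S *v x) \<bullet> x"
    and psd0: "\<And>x. (S *v x) \<bullet> x = 0 \<Longrightarrow> S *v x = 0"
    and v0: "v \<noteq> 0" and vV: "\<And>z. S *v z = 0 \<Longrightarrow> v \<bullet> z = 0"
  shows "lambda_min_nonzero S > 0 \<and>
     (\<forall>w. (\<forall>z. S *v z = 0 \<longrightarrow> w \<bullet> z = 0) \<longrightarrow> lambda_min_nonzero S * (w \<bullet> w) \<le> (S *v w) \<bullet> w)"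
proof -
  define V where "V = {v. \<forall>z. S *v z = 0 \<longrightarrow> v \<bullet> z = 0}"
  have subV: "subspace V"
    unfolding V_def subspace_def by (simp add: inner_add_left)
  have clV: "closed V" using subV closed_subspace by blast
  define Sph where "Sph = V \<inter> sphere 0 1"
  have cSph: "compact Sph" unfolding Sph_def using clV compact_sphere closed_Int_compact by blast
  have vV': "v \<in> V" using vV by (simp add: V_def)
  have "(1 / norm v) *\<^sub>R v \<in> Sph" unfolding Sph_def using vV' v0 subV
    by (simp add: subspace_scale)
  then have neS: "Sph \<noteq> {}" by blast
  define f where "f y = (S *v y) \<bullet> y" for y
  have cf: "continuous_on Sph f" unfolding f_def
    by (intro continuous_intros linear_continuous_on) (simp add: bounded_linear_def)
  obtain x where xS: "x \<in> Sph" and xmin: "\<And>y. y \<in> Sph \<Longrightarrow> f x \<le> f y"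
    using continuous_attains_inf[OF cSph neS cf] by blast
  define m where "m = f x"
  have xV: "x \<in> V" and nx: "norm x = 1" using xS by (auto simp: Sph_def)
  have xx: "x \<bullet> x = 1" using nx by (simp add: dot_square_norm)
  have fsc: "f (c *\<^sub>R y) = c^2 * f y" for c y
    by (simp add: f_def matrix_vector_mult_scaleR power2_eq_square)
  have lowV: "m * (w \<bullet> w) \<le> f w" if wV: "w \<in> V" for w
  proof (cases "w = 0")
    case True then show ?thesis by (simp add: f_def)
  next
    case False
    have "(1 / norm w) *\<^sub>R w \<in> Sph" unfolding Sph_def using wV False subV
      by (simp add: subspace_scale)
    then have "m \<le> (1/norm w)^2 * f w" unfolding m_def using xmin fsc by metis
    then have "norm w ^2 * m \<le> norm w ^2 * ((1/norm w)^2 * f w)"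
      by (simp add: mult_left_mono)
    also have "\<dots> = f w" using False by (simp add: field_simps)
    finally show ?thesis by (simp add: dot_square_norm mult.commute)
  qed
  have stat: "(S *v x) \<bullet> y = 0" if yV: "y \<in> V" and yx: "y \<bullet> x = 0" for y
  proof (rule quad_zero)
    fix t :: real
    have "x + t *\<^sub>R y \<in> V" using xV yV subV by (simp add: subspace_add subspace_scale)
    then have h: "m * ((x + t *\<^sub>R y) \<bullet> (x + t *\<^sub>R y)) \<le> f (x + t *\<^sub>R y)" by (rule lowV)
    have sy: "(S *v y) \<bullet> x = (S *v x) \<bullet> y" using sym_inner[OF sS] by (metis inner_commute)
    have e1: "(x + t *\<^sub>R y) \<bullet> (x + t *\<^sub>R y) = 1 + t^2 * (y \<bullet> y)"
      using xx yx by (simp add: inner_add_left inner_add_right inner_commute power2_eq_square)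
    have e2: "f (x + t *\<^sub>R y) = m + 2*t*((S *v x) \<bullet> y) + t^2 * ((S *v y) \<bullet> y)"
      unfolding f_def m_def using sy
      by (simp add: matrix_vector_right_distrib matrix_vector_mult_scaleR inner_add_left inner_add_right
          power2_eq_square algebra_simps)
    show "0 \<le> 2*t*((S *v x) \<bullet> y) + t^2 * ((S *v y) \<bullet> y - m * (y \<bullet> y))"
      using h unfolding e1 e2 by (simp add: algebra_simps)
  qed
  have SxV: "S *v x \<in> V"
    unfolding V_def using sym_inner[OF sS] by auto
  define y where "y = S *v x - m *\<^sub>R x"
  have yV: "y \<in> V" unfolding y_def using SxV xV subV by (simp add: subspace_diff subspace_scale)
  have yx: "y \<bullet> x = 0" unfolding y_def using xx by (simp add: inner_diff_left m_def f_def)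
  have "y \<bullet> y = (S *v x) \<bullet> y - m * (x \<bullet> y)" unfolding y_def by (simp add: inner_diff_left)
  also have "\<dots> = 0" using stat[OF yV yx] yx by (simp add: inner_commute)
  finally have "y = 0" by simp
  then have eig: "S *v x = m *\<^sub>R x" unfolding y_def by simp
  have x0: "x \<noteq> 0" using nx by auto
  have m0: "m \<noteq> 0"
  proof
    assume "m = 0"
    then have "S *v x = 0" using eig by simp
    then have "x \<bullet> x = 0" using xV by (simp add: V_def)
    then show False using xx by simp
  qed
  define E where "E = {\<mu>. \<mu> \<noteq> 0 \<and> (\<exists>v. v \<noteq> 0 \<and> S *v v = \<mu> *\<^sub>R v)}"
  have mE: "m \<in> E" unfolding E_def using m0 x0 eig by blast
  define ev where "ev \<mu> = (SOME v. v \<noteq> 0 \<and> S *v v = \<mu> *\<^sub>R v)" for \<mu>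
  have evE: "ev \<mu> \<noteq> 0 \<and> S *v ev \<mu> = \<mu> *\<^sub>R ev \<mu>" if "\<mu> \<in> E" for \<mu>
  proof -
    have "\<exists>v. v \<noteq> 0 \<and> S *v v = \<mu> *\<^sub>R v" using that unfolding E_def by blast
    from someI_ex[OF this] show ?thesis unfolding ev_def .
  qed
  have injev: "inj_on ev E"
  proof (rule inj_onI)
    fix a b assume a: "a \<in> E" and b: "b \<in> E" and ab: "ev a = ev b"
    have "a *\<^sub>R ev a = S *v ev a" using evE[OF a] by simp
    also have "\<dots> = S *v ev b" using ab by simp
    also have "\<dots> = b *\<^sub>R ev b" using evE[OF b] by simp
    finally have "a *\<^sub>R ev a = b *\<^sub>R ev a" using ab by simp
    then show "a = b" using evE[OF a] scaleR_cancel_right by blast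
  qed
  have orth: "pairwise orthogonal (ev ` E)"
  proof (unfold pairwise_def, intro ballI impI)
    fix u u' assume u: "u \<in> ev ` E" and u': "u' \<in> ev ` E" and ne: "u \<noteq> u'"
    obtain a where a: "a \<in> E" "u = ev a" using u by blast
    obtain b where b: "b \<in> E" "u' = ev b" using u' by blast
    have "a \<noteq> b" using ne a b by blast
    have "a * (u \<bullet> u') = (S *v u) \<bullet> u'" using evE[OF a(1)] a(2) by simp
    also have "\<dots> = u \<bullet> (S *v u')" by (rule sym_inner[OF sS])
    also have "\<dots> = b * (u \<bullet> u')" using evE[OF b(1)] b(2) by simp
    finally have "(a - b) * (u \<bullet> u') = 0" by (simp add: algebra_simps)
    then show "orthogonal u u'" using \<open>a \<noteq> b\<close> by (simp add: orthogonal_def)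
  qed
  have "0 \<notin> ev ` E" using evE by auto
  then have "independent (ev ` E)" using orth pairwise_orthogonal_independent by blast
  then have "finite (ev ` E)" using independent_imp_finite by blast
  then have finE: "finite E" using injev finite_imageD by blast
  have lmE: "lambda_min_nonzero S = Min E" unfolding lambda_min_nonzero_def E_def by simp
  have le: "Min E \<le> m" using finE mE by simp
  have MinE: "Min E \<in> E" using finE mE Min_in by blast
  have pos: "Min E > 0"
  proof -
    obtain u where u: "u \<noteq> 0" "S *v u = Min E *\<^sub>R u" and nz: "Min E \<noteq> 0"
      using MinE unfolding E_def by blast
    have "0 \<le> (S *v u) \<bullet> u" by (rule psd)
    also have "\<dots> = Min E * (u \<bullet> u)" using u by simp
    finally have "0 \<le> Min E * (u \<bullet> u)" .
    moreover have "u \<bullet> u > 0" using u by simp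
    ultimately show ?thesis using nz by (simp add: zero_le_mult_iff)
  qed
  show ?thesis
  proof (intro conjI allI impI)
    show "lambda_min_nonzero S > 0" using pos lmE by simp
    fix w assume "\<forall>z. S *v z = 0 \<longrightarrow> w \<bullet> z = 0"
    then have wV: "w \<in> V" by (simp add: V_def)
    have "lambda_min_nonzero S * (w \<bullet> w) \<le> m * (w \<bullet> w)"
      using le lmE by (simp add: mult_right_mono)
    also have "\<dots> \<le> f w" by (rule lowV[OF wV])
    finally show "lambda_min_nonzero S * (w \<bullet> w) \<le> (S *v w) \<bullet> w" by (simp add: f_def)
  qed
qed



lemma transpose_diff: "transpose (A - B) = transpose A - transpose (B::real^'n^'m)"
  by (simp add: transpose_def vec_eq_iff)

lemma XXtGX:
  fixes X :: "real^'p^'n"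
  defines "G \<equiv> mp_pinv (X ** transpose X)"
  shows "X *v (transpose X *v (G *v (X *v b))) = X *v b"
proof -
  have sB: "transpose (X ** transpose X) = X ** transpose X" by (simp add: matrix_transpose_mul)
  have pv: "X ** transpose X ** G ** (X ** transpose X) = X ** transpose X"
    using pinv_sym[OF sB] unfolding G_def .
  define E where "E = X ** transpose X ** G ** X - X"
  have EXt: "E ** transpose X = 0"
  proof -
    have "E ** transpose X = X ** transpose X ** G ** X ** transpose X - X ** transpose X"
      unfolding E_def by (simp add: matrix_eq matrix_vector_mult_diff_rdistrib matrix_vector_mul_assoc[symmetric])
    also have "X ** transpose X ** G ** X ** transpose X = X ** transpose X ** G ** (X ** transpose X)"
      by (simp add: matrix_mul_assoc)
    finally show ?thesis using pv by simp
  qed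
  have tE: "transpose E = transpose X ** (transpose (X ** transpose X ** G) - mat 1)"
    unfolding E_def transpose_diff
    by (simp add: matrix_transpose_mul matrix_eq matrix_vector_mult_diff_distrib matrix_vector_mult_diff_rdistrib
        matrix_vector_mul_assoc[symmetric])
  have "transpose E *v v = 0" for v
  proof -
    define t where "t = transpose E *v v"
    have "E *v t = ((E ** transpose X) ** (transpose (X ** transpose X ** G) - mat 1)) *v v"
      unfolding t_def tE by (simp add: matrix_vector_mul_assoc matrix_mul_assoc)
    also have "\<dots> = 0" by (simp add: EXt)
    finally have Et: "E *v t = 0" .
    have "t \<bullet> t = v \<bullet> (E *v t)"
    proof -
      have "(transpose E *v v) \<bullet> t = v \<bullet> (transpose (transpose E) *v t)" by (rule inner_mv)
      then show ?thesis by (simp only: t_def[symmetric] transpose_transpose)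
    qed
    then show ?thesis using Et unfolding t_def by simp
  qed
  then have "transpose E = 0" by (simp add: matrix_eq)
  then have "E = transpose 0" by (metis transpose_transpose)
  then have "E = 0" by (simp add: transpose_def vec_eq_iff)
  then have "X ** transpose X ** G ** X = X" unfolding E_def by simp
  moreover have "X *v (transpose X *v (G *v (X *v b))) = (X ** transpose X ** G ** X) *v b"
    by (simp only: matrix_vector_mul_assoc matrix_mul_assoc)
  ultimately show ?thesis by simp
qed

lemma transpose_add: "transpose (A + B) = transpose A + transpose (B::real^'n^'m)"
  by (simp add: transpose_def vec_eq_iff)

theorem corollary1:
  fixes M :: "'a measure"
    and X :: "real^'p^'n"
    and beta0 :: "real^'p"
    and eps :: "'n \<Rightarrow> 'a \<Rightarrow> real"
    and sigma lam :: real
  assumes "prob_space M"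
    and "\<And>i. eps i \<in> borel_measurable M"
    and "prob_space.indep_vars M (\<lambda>_. borel) eps UNIV"
    and "\<And>i j. distr M borel (eps i) = distr M borel (eps j)"
    and "\<And>i. integrable M (\<lambda>\<omega>. (eps i \<omega>)\<^sup>2)"
    and "\<And>i. prob_space.expectation M (eps i) = 0"
    and "\<And>i. prob_space.variance M (eps i) = sigma\<^sup>2"
    and "sigma > 0"
    and "lam > 0"
    and "Omega_min X lam > 0"
    and "lam / sqrt (Omega_min X lam) * norm (proj_rows X *v beta0)
           \<le> sigma / sqrt (real CARD('n)) * lambda_min_nonzero (Sigma_hat X)"
  shows "(let betahat = (\<lambda>\<omega>. ridge_est X lam (X *v beta0 + (\<chi> i. eps i \<omega>)));
              theta0 = proj_rows X *v beta0
          in Max (range (\<lambda>j. (prob_space.expectation M (\<lambda>\<omega>. betahat \<omega> $ j) - theta0 $ j)\<^sup>2))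
             \<le> Min (range (\<lambda>j. prob_space.variance M (\<lambda>\<omega>. betahat \<omega> $ j))))"
proof -
  note P = assms(1) and meas = assms(2) and ind = assms(3) and sq = assms(5) and e0 = assms(6)
    and va = assms(7) and sig = assms(8) and lam0 = assms(9) and Om0 = assms(10) and hyp = assms(11)
  define n where "n = real CARD('n)"
  have n0: "n > 0" unfolding n_def by simp
  define S where "S = Sigma_hat X"
  define XT where "XT = transpose X"
  have XTi: "(XT *v r) \<bullet> z = r \<bullet> (X *v z)" for r z
    unfolding XT_def using inner_mv[of "transpose X" r z] by simp
  have Sv: "S *v x = (1/n) *\<^sub>R (XT *v (X *v x))" for x
    unfolding S_def Sigma_hat_def n_def XT_def
    by (simp only: scaleR_matrix_vector_assoc[symmetric] matrix_vector_mul_assoc)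
  have sS: "transpose S = S"
    unfolding S_def Sigma_hat_def by (simp add: transpose_scalar matrix_transpose_mul)
  have quad: "(S *v x) \<bullet> x = (1/n) * ((X *v x) \<bullet> (X *v x))" for x
    unfolding Sv by (simp add: XTi)
  have psd: "0 \<le> (S *v x) \<bullet> x" for x using quad n0 by simp
  have Xz: "X *v z = 0" if "(S *v z) \<bullet> z = 0" for z
    using quad[of z] that n0 by simp
  have psd0: "S *v x = 0" if "(S *v x) \<bullet> x = 0" for x
    using Xz[OF that] unfolding Sv by simp
  define A where "A = S + lam *\<^sub>R mat 1"
  have Av: "A *v x = S *v x + lam *\<^sub>R x" for x
    unfolding A_def by (simp add: matrix_vector_mult_add_rdistrib scaleR_matrix_vector_assoc[symmetric])
  have sA: "transpose A = A" unfolding A_def by (simp add: transpose_add transpose_scalar sS)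
  have injA: "inj ((*v) A)"
  proof (rule linear_injective_0[THEN iffD2])
    show "linear ((*v) A)" by simp
    show "\<forall>x. A *v x = 0 \<longrightarrow> x = 0"
    proof (intro allI impI)
      fix x assume "A *v x = 0"
      then have "(S *v x + lam *\<^sub>R x) \<bullet> x = 0" using Av[of x] by simp
      then have "(S *v x) \<bullet> x + lam * (x \<bullet> x) = 0" by (simp only: inner_add_left inner_scaleR_left)
      moreover have "0 \<le> (S *v x) \<bullet> x" by (rule psd)
      ultimately have "lam * (x \<bullet> x) \<le> 0" by linarith
      then have "x \<bullet> x \<le> 0" using lam0 by (simp add: mult_le_0_iff)
      then show "x = 0" by (metis antisym inner_ge_zero inner_eq_zero_iff)
    qed
  qed
  have invA: "invertible A"
    using injA matrix_left_invertible_injective invertible_left_inverse by blast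
  define Ai where "Ai = matrix_inv A"
  have AAim: "A ** Ai = mat 1" and AiAm: "Ai ** A = mat 1" using minv[OF invA] by (auto simp: Ai_def)
  have AAi: "A *v (Ai *v x) = x" for x using AAim by (simp add: matrix_vector_mul_assoc)
  have AiA: "Ai *v (A *v x) = x" for x using AiAm by (simp add: matrix_vector_mul_assoc)
  have sAi: "transpose Ai = Ai"
  proof -
    have "transpose Ai ** A = mat 1"
      using AAim sA by (metis matrix_transpose_mul transpose_mat)
    then have "transpose Ai = transpose Ai ** (A ** Ai)" using AAim by simp
    also have "\<dots> = Ai" using \<open>transpose Ai ** A = mat 1\<close> by (simp add: matrix_mul_assoc)
    finally show ?thesis .
  qed
  have symAi: "(Ai *v x) \<bullet> y = x \<bullet> (Ai *v y)" for x y by (rule sym_inner[OF sAi])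
  define G where "G = mp_pinv (X ** transpose X)"
  define theta0 where "theta0 = proj_rows X *v beta0"
  have th: "theta0 = XT *v (G *v (X *v beta0))"
    unfolding theta0_def proj_rows_def G_def XT_def by (simp only: matrix_vector_mul_assoc matrix_mul_assoc)
  have Xth: "X *v theta0 = X *v beta0" unfolding th XT_def G_def by (rule XXtGX)
  have Sth: "S *v theta0 = S *v beta0" unfolding Sv Xth ..
  have thperp: "theta0 \<bullet> z = 0" if "S *v z = 0" for z
  proof -
    have "X *v z = 0" using Xz that by simp
    then show ?thesis unfolding th XTi by simp
  qed
  define am where "am = (1/n) *\<^sub>R (Ai ** XT)"
  define c where "c = Ai *v (S *v beta0)"
  have ridge: "ridge_est X lam (X *v beta0 + e) = c + am *v e" for e
  proof -
    have "ridge_est X lam (X *v beta0 + e) = Ai *v ((1/n) *\<^sub>R (XT *v (X *v beta0 + e)))"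
      unfolding ridge_est_def Ai_def A_def S_def n_def XT_def ..
    also have "\<dots> = Ai *v ((1/n) *\<^sub>R (XT *v (X *v beta0))) + Ai *v ((1/n) *\<^sub>R (XT *v e))"
      by (simp add: matrix_vector_right_distrib scaleR_add_right)
    also have "\<dots> = c + am *v e"
      unfolding c_def am_def Sv
      by (simp add: scaleR_matrix_vector_assoc[symmetric] matrix_vector_mul_assoc[symmetric]
          matrix_vector_mult_scaleR)
    finally show ?thesis .
  qed
  define bh where "bh = (\<lambda>\<omega>. ridge_est X lam (X *v beta0 + (\<chi> i. eps i \<omega>)))"
  have bhj: "bh \<omega> $ j = c $ j + (\<Sum>i\<in>UNIV. am $ j $ i * eps i \<omega>)" for \<omega> j
    unfolding bh_def ridge by (simp add: matrix_vector_mult_def)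
  have Ej: "prob_space.expectation M (\<lambda>\<omega>. bh \<omega> $ j) = c $ j" for j
    unfolding bhj by (rule var_lin(1)[OF P meas ind sq e0 va])
  have Vj0: "prob_space.variance M (\<lambda>\<omega>. bh \<omega> $ j) = sigma\<^sup>2 * (\<Sum>i\<in>UNIV. (am $ j $ i)\<^sup>2)" for j
    unfolding bhj by (rule var_lin(2)[OF P meas ind sq e0 va])
  define Om where "Om = Omega_mat X lam"
  have OmE: "Om = Ai ** S ** Ai" unfolding Om_def Omega_mat_def Ai_def A_def S_def ..
  have tam: "transpose am = (1/n) *\<^sub>R (X ** Ai)"
    unfolding am_def XT_def by (simp add: transpose_scalar matrix_transpose_mul sAi)
  have amam: "am ** transpose am = (1/n) *\<^sub>R Om"
    unfolding tam OmE matrix_eq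
    by (simp add: am_def Sv scaleR_matrix_vector_assoc[symmetric] matrix_vector_mul_assoc[symmetric]
          matrix_vector_mult_scaleR)
  have sumj: "(\<Sum>i\<in>UNIV. (am $ j $ i)\<^sup>2) = Om $ j $ j / n" for j
  proof -
    have "(\<Sum>i\<in>UNIV. (am $ j $ i)\<^sup>2) = (am ** transpose am) $ j $ j"
      by (simp add: matrix_matrix_mult_def transpose_def power2_eq_square)
    also have "\<dots> = Om $ j $ j / n" unfolding amam by simp
    finally show ?thesis .
  qed
  have Vj: "prob_space.variance M (\<lambda>\<omega>. bh \<omega> $ j) = sigma\<^sup>2 * (Om $ j $ j / n)" for j
    using Vj0 sumj by simp
  define w where "w = Ai *v theta0"
  have bias: "c $ j - theta0 $ j = - lam * w $ j" for j
  proof -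
    have "S *v theta0 = A *v theta0 - lam *\<^sub>R theta0" by (simp add: Av)
    then have "c = theta0 - lam *\<^sub>R w"
      unfolding c_def w_def Sth[symmetric]
      by (simp add: matrix_vector_mult_diff_distrib AiA matrix_vector_mult_scaleR)
    then show ?thesis by simp
  qed
  define Omn where "Omn = Omega_min X lam"
  have fin: "finite (range f)" for f :: "'p \<Rightarrow> real" by simp
  have Omle: "Omn \<le> Om $ k $ k" for k
    unfolding Omn_def Omega_min_def Om_def by (rule Min_le) auto
  have key: "(lam * w $ j)\<^sup>2 \<le> sigma\<^sup>2 * (Omn / n)" for j
  proof (cases "theta0 = 0")
    case True
    then have "w = 0" by (simp add: w_def)
    then show ?thesis using Om0 n0 by (simp add: Omn_def)
  next
    case False
    obtain mu: "lambda_min_nonzero S > 0"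
      and low: "\<And>v. (\<forall>z. S *v z = 0 \<longrightarrow> v \<bullet> z = 0) \<Longrightarrow> lambda_min_nonzero S * (v \<bullet> v) \<le> (S *v v) \<bullet> v"
      using spec[OF sS psd psd0 False thperp] by blast
    define mu where "mu = lambda_min_nonzero S"
    have wperp: "\<forall>z. S *v z = 0 \<longrightarrow> w \<bullet> z = 0"
    proof (intro allI impI)
      fix z assume Sz: "S *v z = 0"
      have "Ai *v (lam *\<^sub>R z) = z" using AiA[of z] by (simp add: Av Sz)
      then have "lam *\<^sub>R (Ai *v z) = z" by (simp add: matrix_vector_mult_scaleR)
      have "Ai *v z = (1/lam) *\<^sub>R (lam *\<^sub>R (Ai *v z))" using lam0 by simp
      then have Aiz: "Ai *v z = (1/lam) *\<^sub>R z" using \<open>lam *\<^sub>R (Ai *v z) = z\<close> by simp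
      show "w \<bullet> z = 0" unfolding w_def symAi Aiz using thperp[OF Sz] by simp
    qed
    have "mu * (w \<bullet> w) \<le> (S *v w) \<bullet> w" using low[OF wperp] by (simp add: mu_def)
    also have "\<dots> \<le> (A *v w) \<bullet> w" using lam0 by (simp add: Av inner_add_left)
    also have "\<dots> = theta0 \<bullet> w" by (simp add: w_def AAi)
    also have "\<dots> \<le> norm theta0 * norm w" by (rule norm_cauchy_schwarz)
    finally have "mu * (norm w * norm w) \<le> norm theta0 * norm w"
      by (simp add: dot_square_norm power2_eq_square)
    then have nw: "mu * norm w \<le> norm theta0"
      by (cases "norm w = 0") (simp_all add: mult.assoc[symmetric])
    have mup: "mu > 0" using mu by (simp add: mu_def)
    have hyp': "lam / sqrt Omn * norm theta0 \<le> sigma / sqrt n * mu"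
      using hyp by (simp add: Omn_def theta0_def n_def mu_def S_def)
    have sO: "sqrt Omn > 0" using Om0 by (simp add: Omn_def)
    have sn: "sqrt n > 0" using n0 by simp
    have "lam * norm theta0 \<le> sigma * sqrt Omn / sqrt n * mu"
      using hyp' sO sn by (simp add: field_simps)
    then have r: "lam * norm w \<le> sigma * sqrt Omn / sqrt n"
    proof -
      assume h: "lam * norm theta0 \<le> sigma * sqrt Omn / sqrt n * mu"
      have "mu * (lam * norm w) \<le> lam * norm theta0" using nw lam0
        by (metis mult.left_commute mult_left_mono less_imp_le)
      also have "\<dots> \<le> mu * (sigma * sqrt Omn / sqrt n)" using h by (simp add: mult.commute)
      finally have "mu * (lam * norm w) \<le> mu * (sigma * sqrt Omn / sqrt n)" .
      then show ?thesis using mup mult_le_cancel_left_pos by blast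
    qed
    have "\<bar>lam * w $ j\<bar> \<le> lam * norm w"
      using component_le_norm_cart[of w j] lam0 by (simp add: abs_mult)
    also have "\<dots> \<le> sigma * sqrt Omn / sqrt n" by (rule r)
    finally have "\<bar>lam * w $ j\<bar>\<^sup>2 \<le> (sigma * sqrt Omn / sqrt n)\<^sup>2"
      by (rule power_mono) simp
    also have "\<dots> = sigma\<^sup>2 * (Omn / n)"
      using Om0 n0 by (simp add: power_divide power_mult_distrib Omn_def)
    finally show ?thesis by simp
  qed
  have all: "(prob_space.expectation M (\<lambda>\<omega>. bh \<omega> $ j) - theta0 $ j)\<^sup>2
          \<le> prob_space.variance M (\<lambda>\<omega>. bh \<omega> $ k)" for j k
  proof -
    have "(prob_space.expectation M (\<lambda>\<omega>. bh \<omega> $ j) - theta0 $ j)\<^sup>2 = (lam * w $ j)\<^sup>2"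
      unfolding Ej bias by (simp add: power2_eq_square)
    also have "\<dots> \<le> sigma\<^sup>2 * (Omn / n)" by (rule key)
    also have "\<dots> \<le> sigma\<^sup>2 * (Om $ k $ k / n)"
      using Omle[of k] n0 by (simp add: divide_right_mono mult_left_mono)
    finally show ?thesis unfolding Vj .
  qed
  have "Max (range (\<lambda>j. (prob_space.expectation M (\<lambda>\<omega>. bh \<omega> $ j) - theta0 $ j)\<^sup>2))
        \<le> Min (range (\<lambda>j. prob_space.variance M (\<lambda>\<omega>. bh \<omega> $ j)))"
    using all by (simp add: Max_le_iff Min_ge_iff)
  then show ?thesis unfolding bh_def theta0_def Let_def .
qed


end
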